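(* Let $X=A_1\oplus\cdots\oplus A_c=(V,E)$ be an additive product graph, let $p\ge 1$, and let $(\boldsymbol{\gamma},\boldsymbol{\beta})$ be any depth-$p$ ma-QAOA parameters with one angle $\gamma_{j,C}$ per layer $j\in[p]$ and edge category $C\in[c]$ and one angle $\beta_j$ per layer. Fix $C\in[c]$ and an edge $\{u,v\}$ of $\underline{A}_C$. Then the value $\langle\boldsymbol{\gamma},\boldsymbol{\beta}|Z_xZ_y|\boldsymbol{\gamma},\boldsymbol{\beta}\rangle$ is the same for every edge $\{x,y\}$ of $X$ of type $(C,\{u,v\})$, i.e. for all edges of the forms $\{v_1,v_1Cv\}$ (when $u=v_1$), $\{sCu,sCv\}$ (for any admissible string $s$), and $\{sC'w\,,\,sC'wCv\}$-type edges $\{s C' u, sC'uCv\}$ (for any admissible string $s$ and any $C'\neq C$). Consequently each edge $\{u,v\}$ of each $\underline{A}_C$ determines a single value, denoted $-\mathbb{E}[\underline{A}_C(u,v)]$ (so that $\mathbb{E}[\underline{A}_C(u,v)]=-\langle Z_xZ_y\rangle$ for any edge $\{x,y\}$ of type $(C,\{u,v\})$), and all such edges have isomorphic radius-$p$ neighborhoods in $X$ (isomorphic as category-labelled graphs).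
   Context: Additive product graph. Let $n,c\ge1$ and let $A_1,\dots,A_c$ be graphs ("plain atoms") on the common vertex set $[n]=\{1,\dots,n\}$. Let $\underline{A}_j$ denote $A_j$ with its isolated vertices removed; assume each $\underline{A}_j$ is nonempty and connected and that the union graph $([n],E(A_1)\cup\cdots\cup E(A_c))$ is connected. Fix $v_1\in[n]$. The additive product graph $X=A_1\oplus\cdots\oplus A_c=(V,E)$ has as vertex set $V$ the set of strings $v_1C_1v_2C_2\cdots v_kC_kv_{k+1}$ ($k\ge0$) with each $v_i\in[n]$, each $C_i\in[c]$, $C_i\neq C_{i+1}$ for $i<k$, and $v_i,v_{i+1}$ both vertices of $\underline{A}_{C_i}$ for all $i\le k$. Its edge set $E$ consists of (all strings involved being required to lie in $V$, $s$ denoting a prefix string): (i) $\{sCu,sCv\}$ whenever $\{u,v\}$ is an edge of $\underline{A}_C$; (ii) $\{sC'u,\,sC'uCv\}$ whenever $\{u,v\}$ is an edge of $\underline{A}_{C}$ (with $C\ne C'$); (iii) $\{v_1,v_1Cv\}$ whenever $\{v_1,v\}$ is an edge of $\underline{A}_C$. An edge of $X$ produced in (i), (ii) or (iii) from the edge $\{u,v\}$ of $\underline{A}_C$ (with $u=v_1$ in (iii)) is said to be of type $(C,\{u,v\})$ and of category $C$. ma-QAOA on $X$. Parameters: $\gamma_{j,C}\in[0,2\pi]$ for $j\in[p]$, $C\in[c]$, and $\beta_j\in[0,2\pi]$ for $j\in[p]$. For a finite graph $H$ whose edges carry categories $c(e)\in[c]$, the ma-QAOA state is $|\boldsymbol{\gamma},\boldsymbol{\beta}\rangle=e^{-i\beta_pB}e^{-iC_{p}}\cdots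 e^{-i\beta_1B}e^{-iC_{1}}|+\rangle^{\otimes V(H)}$, where $B=\sum_{v}X_v$ and $C_j=-\sum_{\{u,v\}\in E(H)}\gamma_{j,c(\{u,v\})}Z_uZ_v$ ($X_v,Z_v$ Pauli operators on qubit $v$). For an edge $\{x,y\}$ of the infinite graph $X$, $\langle\boldsymbol{\gamma},\boldsymbol{\beta}|Z_xZ_y|\boldsymbol{\gamma},\boldsymbol{\beta}\rangle$ is defined as this expectation computed on the finite subgraph of $X$ induced by the vertices at graph distance at most $p$ from $\{x,y\}$ (with inherited categories). Standard QAOA is the special case $\gamma_{j,1}=\cdots=\gamma_{j,c}$ for all $j$. *)

theory Defs
  imports Complex_Main
begin

definition edge_rel :: "nat set set \<Rightarrow> (nat \<times> nat) set" where
  "edge_rel E = {(a, b). {a, b} \<in> E}"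

text \<open>A j is the edge set of the plain atom A_j on [n] = {1..n}; its underlying graph
  (isolated vertices removed) has vertex set the union of the edges of A j.\<close>
definition atoms_ok :: "nat \<Rightarrow> nat \<Rightarrow> (nat \<Rightarrow> nat set set) \<Rightarrow> bool" where
  "atoms_ok n c A \<longleftrightarrow> n \<ge> 1 \<and> c \<ge> 1 \<and>
     (\<forall>j\<in>{1..c}.
        A j \<subseteq> {e. \<exists>a b. e = {a, b} \<and> a \<noteq> b \<and> a \<in> {1..n} \<and> b \<in> {1..n}} \<and>
        A j \<noteq> {} \<and>
        (\<forall>a\<in>\<Union>(A j). \<forall>b\<in>\<Union>(A j). (a, b) \<in> (edge_rel (A j))\<^sup>*)) \<and>
     (\<forall>a\<in>{1..n}. \<forall>b\<in>{1..n}. (a, b) \<in> (edge_rel (\<Union>j\<in>{1..c}. A j))\<^sup>*)"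

text \<open>A vertex v_1 C_1 v_2 ... C_k v_(k+1) (with v_1 = r the fixed root) is represented by the
  list [(C_1,v_2), ..., (C_k,v_(k+1))].  The empty list is the root string v_1.\<close>
fun valid_from :: "(nat \<Rightarrow> nat set set) \<Rightarrow> nat \<Rightarrow> nat \<Rightarrow> nat option \<Rightarrow> (nat \<times> nat) list \<Rightarrow> bool" where
  "valid_from A c v prevC [] = True"
| "valid_from A c v prevC ((C, w) # ps) =
     (C \<in> {1..c} \<and> prevC \<noteq> Some C \<and> v \<in> \<Union>(A C) \<and> w \<in> \<Union>(A C) \<and> v \<noteq> w \<and>
      valid_from A c w (Some C) ps)"

definition apg_vert :: "(nat \<Rightarrow> nat set set) \<Rightarrow> nat \<Rightarrow> nat \<Rightarrow> (nat \<times> nat) list \<Rightarrow> bool" where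
  "apg_vert A c r s = valid_from A c r None s"

text \<open>Edges of X together with their category C and their type edge {u,v} of A_C.\<close>
definition apg_typed_edges ::
  "(nat \<Rightarrow> nat set set) \<Rightarrow> nat \<Rightarrow> nat \<Rightarrow> ((nat \<times> nat) list set \<times> nat \<times> nat set) set" where
  "apg_typed_edges A c r =
     {({s @ [(C, u)], s @ [(C, v)]}, C, {u, v}) | s C u v.
        {u, v} \<in> A C \<and> apg_vert A c r (s @ [(C, u)]) \<and> apg_vert A c r (s @ [(C, v)])}
   \<union> {({s @ [(C', u)], s @ [(C', u), (C, v)]}, C, {u, v}) | s C C' u v.
        {u, v} \<in> A C \<and> C \<noteq> C' \<and> apg_vert A c r (s @ [(C', u)]) \<and>
        apg_vert A c r (s @ [(C', u), (C, v)])}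
   \<union> {({[], [(C, v)]}, C, {r, v}) | C v. {r, v} \<in> A C \<and> apg_vert A c r [(C, v)]}"

definition apg_cat_edges :: "(nat \<Rightarrow> nat set set) \<Rightarrow> nat \<Rightarrow> nat \<Rightarrow> ((nat \<times> nat) list set \<times> nat) set" where
  "apg_cat_edges A c r = {(e, C). \<exists>t. (e, C, t) \<in> apg_typed_edges A c r}"

definition apg_adj :: "(nat \<Rightarrow> nat set set) \<Rightarrow> nat \<Rightarrow> nat \<Rightarrow> ((nat \<times> nat) list \<times> (nat \<times> nat) list) set" where
  "apg_adj A c r = {(x, y). \<exists>C. ({x, y}, C) \<in> apg_cat_edges A c r}"

definition apg_ball :: "(nat \<Rightarrow> nat set set) \<Rightarrow> nat \<Rightarrow> nat \<Rightarrow> nat \<Rightarrow> (nat \<times> nat) list \<Rightarrow> (nat \<times> nat) list \<Rightarrow> (nat \<times> nat) list set" where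
  "apg_ball A c r p x y = {w. \<exists>k\<le>p. (x, w) \<in> (apg_adj A c r) ^^ k \<or> (y, w) \<in> (apg_adj A c r) ^^ k}"

definition apg_induced :: "(nat \<Rightarrow> nat set set) \<Rightarrow> nat \<Rightarrow> nat \<Rightarrow> (nat \<times> nat) list set \<Rightarrow> ((nat \<times> nat) list set \<times> nat) set" where
  "apg_induced A c r W = {(e, C) \<in> apg_cat_edges A c r. e \<subseteq> W}"

text \<open>Computational basis states of the qubits in W are subsets S of W (S = qubits in state 1);
  a state vector is a function from subsets of W to complex amplitudes.\<close>
definition spin :: "'v set \<Rightarrow> 'v \<Rightarrow> real" where
  "spin S v = (if v \<in> S then -1 else 1)"

text \<open>exp(-i C_j) with C_j = - sum over edges of gamma_(j,c(e)) Z_u Z_v (diagonal).\<close>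
definition phase_sep :: "('v set \<times> nat) set \<Rightarrow> (nat \<Rightarrow> real) \<Rightarrow> ('v set \<Rightarrow> complex) \<Rightarrow> ('v set \<Rightarrow> complex)" where
  "phase_sep Ed g \<psi> = (\<lambda>S. cis (\<Sum>(e, C)\<in>Ed. g C * (\<Prod>v\<in>e. spin S v)) * \<psi> S)"

text \<open>exp(-i b B), B = sum of X_v: tensor product of cos b I - i sin b X.\<close>
definition mixer :: "'v set \<Rightarrow> real \<Rightarrow> ('v set \<Rightarrow> complex) \<Rightarrow> ('v set \<Rightarrow> complex)" where
  "mixer W b \<psi> = (\<lambda>S. \<Sum>T\<in>Pow W.
      (\<Prod>v\<in>W. if (v \<in> S) = (v \<in> T) then complex_of_real (cos b) else - \<i> * complex_of_real (sin b)) * \<psi> T)"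

fun qaoa_state :: "'v set \<Rightarrow> ('v set \<times> nat) set \<Rightarrow> nat \<Rightarrow> (nat \<Rightarrow> nat \<Rightarrow> real) \<Rightarrow> (nat \<Rightarrow> real) \<Rightarrow> ('v set \<Rightarrow> complex)" where
  "qaoa_state W Ed 0 g b = (\<lambda>S. complex_of_real (1 / sqrt 2 ^ card W))"
| "qaoa_state W Ed (Suc j) g b = mixer W (b (Suc j)) (phase_sep Ed (g (Suc j)) (qaoa_state W Ed j g b))"

definition zz_exp :: "'v set \<Rightarrow> ('v set \<times> nat) set \<Rightarrow> nat \<Rightarrow> (nat \<Rightarrow> nat \<Rightarrow> real) \<Rightarrow> (nat \<Rightarrow> real) \<Rightarrow> 'v \<Rightarrow> 'v \<Rightarrow> real" where
  "zz_exp W Ed p g b x y = (\<Sum>S\<in>Pow W. (cmod (qaoa_state W Ed p g b S))\<^sup>2 * spin S x * spin S y)"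

definition apg_zz :: "(nat \<Rightarrow> nat set set) \<Rightarrow> nat \<Rightarrow> nat \<Rightarrow> nat \<Rightarrow> (nat \<Rightarrow> nat \<Rightarrow> real) \<Rightarrow> (nat \<Rightarrow> real) \<Rightarrow> (nat \<times> nat) list \<Rightarrow> (nat \<times> nat) list \<Rightarrow> real" where
  "apg_zz A c r p g b x y =
     (let W = apg_ball A c r p x y in zz_exp W (apg_induced A c r W) p g b x y)"

end

theory Submission
  imports Defs
begin

lemma qaoa_iso:
  assumes bij: "bij_betw f W W'"
    and EdW: "\<forall>(e,D)\<in>Ed. e \<subseteq> W"
    and Ed': "Ed' = (\<lambda>(e,D). (f ` e, D)) ` Ed"
    and S: "S \<subseteq> W"
  shows "qaoa_state W' Ed' j g b (f ` S) = qaoa_state W Ed j g b S"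
  using S
proof (induction j arbitrary: S)
  case 0
  then show ?case using bij_betw_same_card[OF bij] by simp
next
  case (Suc j)
  have inj: "inj_on f W" using bij_betw_imp_inj_on[OF bij] .
  have fW: "f ` W = W'" using bij_betw_imp_surj_on[OF bij] .
  have injE: "inj_on (\<lambda>(e,D). (f ` e, D)) Ed"
  proof (rule inj_onI)
    fix p1 p2 assume p1: "p1 \<in> Ed" and p2: "p2 \<in> Ed"
      and eq: "(\<lambda>(e,D). (f ` e, D)) p1 = (\<lambda>(e,D). (f ` e, D)) p2"
    obtain e1 D1 where q1: "p1 = (e1, D1)" by (cases p1)
    obtain e2 D2 where q2: "p2 = (e2, D2)" by (cases p2)
    have i1: "f ` e1 = f ` e2" and i2: "D1 = D2" using eq q1 q2 by simp_all
    have "e1 \<in> Pow W" "e2 \<in> Pow W" using p1 p2 q1 q2 EdW by auto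
    then have "e1 = e2" using inj_onD[OF inj_on_image_Pow[OF inj] i1] by blast
    then show "p1 = p2" using q1 q2 i2 by simp
  qed
  have spin_eq: "spin (f ` T) (f v) = spin T v" if "T \<subseteq> W" "v \<in> W" for T v
    using inj_on_image_mem_iff[OF inj that(2) that(1)] unfolding spin_def by simp
  have ph: "phase_sep Ed' h (qaoa_state W' Ed' j g b) (f ` T) = phase_sep Ed h (qaoa_state W Ed j g b) T"
    if T: "T \<subseteq> W" for T h
  proof -
    have "(\<Sum>(e, C)\<in>Ed'. h C * (\<Prod>v\<in>e. spin (f ` T) v)) = (\<Sum>(e, C)\<in>Ed. h C * (\<Prod>v\<in>e. spin T v))"
    proof -
      have "(\<Sum>(e, C)\<in>Ed'. h C * (\<Prod>v\<in>e. spin (f ` T) v))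
          = (\<Sum>x\<in>Ed. (\<lambda>(e, C). h C * (\<Prod>v\<in>e. spin (f ` T) v)) ((\<lambda>(e,D). (f ` e, D)) x))"
        unfolding Ed' by (rule sum.reindex[OF injE, unfolded comp_def])
      also have "\<dots> = (\<Sum>(e, C)\<in>Ed. h C * (\<Prod>v\<in>e. spin T v))"
      proof (rule sum.cong[OF refl], clarify)
        fix e C assume eC: "(e, C) \<in> Ed"
        then have eW: "e \<subseteq> W" using EdW by auto
        have ie: "inj_on f e" using inj_on_subset[OF inj eW] .
        have "(\<Prod>v\<in>f ` e. spin (f ` T) v) = (\<Prod>v\<in>e. spin (f ` T) (f v))"
          using prod.reindex[OF ie] by simp
        also have "\<dots> = (\<Prod>v\<in>e. spin T v)"
          using eW spin_eq[OF T] by (intro prod.cong) auto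
        finally show "h C * (\<Prod>v\<in>f ` e. spin (f ` T) v) = h C * (\<Prod>v\<in>e. spin T v)" by simp
      qed
      finally show ?thesis .
    qed
    then show ?thesis unfolding phase_sep_def using Suc.IH[OF T] by simp
  qed
  have "mixer W' (b (Suc j)) (phase_sep Ed' (g (Suc j)) (qaoa_state W' Ed' j g b)) (f ` S)
      = mixer W (b (Suc j)) (phase_sep Ed (g (Suc j)) (qaoa_state W Ed j g b)) S"
  proof -
    let ?co = "\<lambda>S T v. if (v \<in> S) = (v \<in> T) then complex_of_real (cos (b (Suc j))) else - \<i> * complex_of_real (sin (b (Suc j)))"
    have bP: "bij_betw (image f) (Pow W) (Pow W')" using bij_betw_image_Pow[OF bij] .
    have "(\<Sum>T\<in>Pow W'. (\<Prod>v\<in>W'. ?co (f ` S) T v) * phase_sep Ed' (g (Suc j)) (qaoa_state W' Ed' j g b) T)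
       = (\<Sum>T\<in>Pow W. (\<Prod>v\<in>W'. ?co (f ` S) (f ` T) v) * phase_sep Ed' (g (Suc j)) (qaoa_state W' Ed' j g b) (f ` T))"
      using sum.reindex_bij_betw[OF bP, symmetric] by simp
    also have "\<dots> = (\<Sum>T\<in>Pow W. (\<Prod>v\<in>W. ?co S T v) * phase_sep Ed (g (Suc j)) (qaoa_state W Ed j g b) T)"
    proof (rule sum.cong[OF refl])
      fix T assume "T \<in> Pow W"
      then have T: "T \<subseteq> W" by auto
      have "(\<Prod>v\<in>W'. ?co (f ` S) (f ` T) v) = (\<Prod>v\<in>W. ?co (f ` S) (f ` T) (f v))"
        using prod.reindex_bij_betw[OF bij, symmetric] by simp
      also have "\<dots> = (\<Prod>v\<in>W. ?co S T v)"
      proof (rule prod.cong[OF refl])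
        fix v assume v: "v \<in> W"
        have "(f v \<in> f ` S) = (v \<in> S)" "(f v \<in> f ` T) = (v \<in> T)"
          using inj_on_image_mem_iff[OF inj v] T Suc.prems by auto
        then show "?co (f ` S) (f ` T) (f v) = ?co S T v" by simp
      qed
      finally show "(\<Prod>v\<in>W'. ?co (f ` S) (f ` T) v) * phase_sep Ed' (g (Suc j)) (qaoa_state W' Ed' j g b) (f ` T)
          = (\<Prod>v\<in>W. ?co S T v) * phase_sep Ed (g (Suc j)) (qaoa_state W Ed j g b) T"
        using ph[OF T] by simp
    qed
    finally show ?thesis unfolding mixer_def .
  qed
  then show ?case by simp
qed

lemma zz_iso:
  assumes bij: "bij_betw f W W'"
    and EdW: "\<forall>(e,D)\<in>Ed. e \<subseteq> W"
    and Ed': "Ed' = (\<lambda>(e,D). (f ` e, D)) ` Ed"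
    and x: "x \<in> W" and y: "y \<in> W"
  shows "zz_exp W' Ed' p g b (f x) (f y) = zz_exp W Ed p g b x y"
proof -
  have inj: "inj_on f W" using bij_betw_imp_inj_on[OF bij] .
  have bP: "bij_betw (image f) (Pow W) (Pow W')" using bij_betw_image_Pow[OF bij] .
  have spin_eq: "spin (f ` T) (f v) = spin T v" if "T \<subseteq> W" "v \<in> W" for T v
    using inj_on_image_mem_iff[OF inj that(2) that(1)] unfolding spin_def by simp
  have "zz_exp W' Ed' p g b (f x) (f y) = (\<Sum>S\<in>Pow W. (cmod (qaoa_state W' Ed' p g b (f ` S)))\<^sup>2 * spin (f ` S) (f x) * spin (f ` S) (f y))"
    unfolding zz_exp_def using sum.reindex_bij_betw[OF bP, symmetric] by simp
  also have "\<dots> = zz_exp W Ed p g b x y"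
    unfolding zz_exp_def
    using qaoa_iso[OF bij EdW Ed'] spin_eq x y by (intro sum.cong) auto
  finally show ?thesis .
qed

lemma valid_from_append:
  "valid_from A c v q (xs @ ys) \<longleftrightarrow> valid_from A c v q xs \<and>
     valid_from A c (if xs = [] then v else snd (last xs)) (if xs = [] then q else Some (fst (last xs))) ys"
  by (induction xs arbitrary: v q) auto

lemma valid_from_None: "valid_from A c v q t \<Longrightarrow> valid_from A c v None t"
  by (cases t) auto

definition lv :: "nat \<Rightarrow> (nat \<times> nat) list \<Rightarrow> nat" where
  "lv r t = (if t = [] then r else snd (last t))"

definition EE :: "(nat \<Rightarrow> nat set set) \<Rightarrow> nat \<Rightarrow> nat \<Rightarrow> nat \<Rightarrow> (nat \<times> nat) list \<Rightarrow> (nat \<times> nat) list \<Rightarrow> bool" where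
  "EE A c r D a b \<longleftrightarrow> apg_vert A c r a \<and> apg_vert A c r b \<and>
     ((\<exists>s z z'. a = s @ [(D, z)] \<and> b = s @ [(D, z')] \<and> {z, z'} \<in> A D) \<or>
      (\<exists>z. b = a @ [(D, z)] \<and> {lv r a, z} \<in> A D))"

lemma cat_form: "(e, D) \<in> apg_cat_edges A c r \<Longrightarrow> \<exists>a b. e = {a, b}"
  unfolding apg_cat_edges_def apg_typed_edges_def by blast

lemma cat_iff: "({a, b}, D) \<in> apg_cat_edges A c r \<longleftrightarrow> EE A c r D a b \<or> EE A c r D b a"
proof
  assume "({a, b}, D) \<in> apg_cat_edges A c r"
  then show "EE A c r D a b \<or> EE A c r D b a"
    unfolding apg_cat_edges_def apg_typed_edges_def EE_def
    apply (simp add: doubleton_eq_iff)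
    apply (elim disjE exE conjE)
    apply (simp_all add: apg_vert_def lv_def)
    done
next
  have one: "({a, b}, D) \<in> apg_cat_edges A c r" if E: "EE A c r D a b" for a b
  proof -
    from E have va: "apg_vert A c r a" and vb: "apg_vert A c r b" unfolding EE_def by auto
    from E consider (A) s z z' where "a = s @ [(D, z)]" "b = s @ [(D, z')]" "{z, z'} \<in> A D"
      | (B) z where "b = a @ [(D, z)]" "{lv r a, z} \<in> A D" unfolding EE_def by blast
    then show ?thesis
    proof cases
      case A
      then have "({a, b}, D, {z, z'}) \<in> apg_typed_edges A c r"
        unfolding apg_typed_edges_def using va vb by blast
      then show ?thesis unfolding apg_cat_edges_def by blast
    next
      case B
      show ?thesis
      proof (cases "a = []")
        case True
        then have "({a, b}, D, {r, z}) \<in> apg_typed_edges A c r"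
          unfolding apg_typed_edges_def using vb B by (simp add: lv_def) blast
        then show ?thesis unfolding apg_cat_edges_def by blast
      next
        case False
        then obtain s C' u where a: "a = s @ [(C', u)]" by (metis prod.exhaust rev_exhaust)
        have "C' \<noteq> D" using vb B a unfolding apg_vert_def by (simp add: valid_from_append)
        then have "({a, b}, D, {u, z}) \<in> apg_typed_edges A c r"
          unfolding apg_typed_edges_def using va vb B a by (simp add: lv_def) blast
        then show ?thesis unfolding apg_cat_edges_def by blast
      qed
    qed
  qed
  assume "EE A c r D a b \<or> EE A c r D b a"
  then show "({a, b}, D) \<in> apg_cat_edges A c r"
    using one[of a b] one[of b a] by (auto simp: insert_commute)
qed


definition psi :: "nat \<Rightarrow> nat \<Rightarrow> nat \<Rightarrow> (nat \<times> nat) list \<Rightarrow> (nat \<times> nat) list" where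
  "psi r w C t = (case t of [] \<Rightarrow> [(C, r)] | (D, z) # t' \<Rightarrow>
      if D = C then (if z = w then t' else t) else (C, r) # t)"

lemma psi_Nil[simp]: "psi r w C [] = [(C, r)]" by (simp add: psi_def)
lemma psi_Cons[simp]: "psi r w C ((D, z) # t) = (if D = C then (if z = w then t else (D, z) # t) else (C, r) # (D, z) # t)"
  by (simp add: psi_def)

lemma psi_append: "t \<noteq> [] \<Longrightarrow> psi r w C (t @ x) = psi r w C t @ x"
  by (cases t) (auto simp: psi_def split: prod.splits)

lemma psi_lv: "lv w (psi r w C t) = lv r t"
  by (cases t) (auto simp: psi_def lv_def split: prod.splits)

lemma psi_valid:
  assumes C: "C \<in> {1..c}" and r: "r \<in> \<Union>(A C)" and w: "w \<in> \<Union>(A C)" and rw: "r \<noteq> w"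
    and t: "apg_vert A c r t"
  shows "apg_vert A c w (psi r w C t)"
proof (cases t)
  case Nil
  then show ?thesis using C r w rw by (simp add: apg_vert_def)
next
  case (Cons p t')
  obtain D z where p: "p = (D, z)" by (cases p)
  show ?thesis
    using t C r w rw unfolding Cons p apg_vert_def
    by (auto intro: valid_from_None)
qed

lemma psi_inv:
  assumes t: "apg_vert A c r t"
  shows "psi w r C (psi r w C t) = t"
proof (cases t)
  case Nil
  then show ?thesis by simp
next
  case (Cons p t')
  obtain D z where p: "p = (D, z)" by (cases p)
  show ?thesis
  proof (cases "D = C \<and> z = w")
    case True
    show ?thesis
    proof (cases t')
      case Nil
      then show ?thesis using True Cons p by simp
    next
      case (Cons q t'')
      obtain D' z' where q: "q = (D', z')" by (cases q)
      have "D' \<noteq> C" using t True \<open>t = p # t'\<close> p Cons q by (simp add: apg_vert_def)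
      then show ?thesis using True \<open>t = p # t'\<close> p Cons q by simp
    qed
  next
    case False
    have "D = C \<Longrightarrow> z \<noteq> r" using t Cons p by (simp add: apg_vert_def)
    then show ?thesis using False Cons p by auto
  qed
qed


lemma vert_snoc_D: "apg_vert A c r (s @ [(D, z)]) \<Longrightarrow> D \<in> {1..c} \<and> lv r s \<in> \<Union>(A D) \<and> z \<in> \<Union>(A D) \<and> lv r s \<noteq> z \<and> apg_vert A c r s"
  unfolding apg_vert_def lv_def by (auto simp: valid_from_append)

lemma psi_EE:
  assumes nl: "\<forall>D\<in>{1..c}. \<forall>z. {z} \<notin> A D"
    and C: "C \<in> {1..c}" and r: "r \<in> \<Union>(A C)" and w: "w \<in> \<Union>(A C)" and rw: "r \<noteq> w"
    and E: "EE A c r D a b"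
  shows "EE A c w D (psi r w C a) (psi r w C b) \<or> EE A c w D (psi r w C b) (psi r w C a)"
proof -
  from E have va: "apg_vert A c r a" and vb: "apg_vert A c r b" unfolding EE_def by auto
  have va': "apg_vert A c w (psi r w C a)" and vb': "apg_vert A c w (psi r w C b)"
    using psi_valid[of C c r A w, OF C r w rw] va vb by auto
  from E consider (TA) s z z' where "a = s @ [(D, z)]" "b = s @ [(D, z')]" "{z, z'} \<in> A D"
      | (TB) z where "b = a @ [(D, z)]" "{lv r a, z} \<in> A D" unfolding EE_def by blast
  then show ?thesis
  proof cases
    case TA
    have D: "D \<in> {1..c}" using vert_snoc_D va TA by blast
    have zz: "z \<noteq> z'" using nl D TA by auto
    show ?thesis
    proof (cases "s = []")
      case False
      then show ?thesis using TA va' vb' psi_append[OF False] unfolding EE_def by auto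
    next
      case True
      show ?thesis
      proof (cases "D = C")
        case DC: True
        show ?thesis
        proof (cases "z = w")
          case True
          then have "psi r w C a = []" "psi r w C b = [] @ [(D, z')]" using TA \<open>s = []\<close> DC zz by auto
          then show ?thesis using va' vb' TA True unfolding EE_def lv_def by auto
        next
          case zw: False
          show ?thesis
          proof (cases "z' = w")
            case True
            then have "psi r w C b = []" "psi r w C a = [] @ [(D, z)]" using TA \<open>s = []\<close> DC zz by auto
            then show ?thesis using va' vb' TA True unfolding EE_def lv_def by (auto simp: insert_commute)
          next
            case False
            then have "psi r w C b = [] @ [(D, z')]" "psi r w C a = [] @ [(D, z)]" using TA \<open>s = []\<close> DC zw by auto
            then show ?thesis using va' vb' TA unfolding EE_def by blast
          qed
        qed
      next
        case False
        then have "psi r w C b = [(C, r)] @ [(D, z')]" "psi r w C a = [(C, r)] @ [(D, z)]" using TA \<open>s = []\<close> by auto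
        then show ?thesis using va' vb' TA unfolding EE_def by blast
      qed
    qed
  next
    case TB
    show ?thesis
    proof (cases "a = []")
      case False
      then show ?thesis using TB va' vb' psi_append[OF False] psi_lv[of w r C a] unfolding EE_def by auto
    next
      case an: True
      show ?thesis
      proof (cases "D = C")
        case DC: True
        show ?thesis
        proof (cases "z = w")
          case True
          then have "psi r w C a = [] @ [(C, r)]" "psi r w C b = []" using TB an DC by auto
          then show ?thesis using va' vb' TB True an DC unfolding EE_def lv_def by (auto simp: insert_commute)
        next
          case False
          then have "psi r w C a = [] @ [(C, r)]" "psi r w C b = [] @ [(C, z)]" using TB an DC by auto
          then show ?thesis using va' vb' TB an DC unfolding EE_def lv_def by auto
        qed
      next
        case False
        then have "psi r w C a = [(C, r)]" "psi r w C b = [(C, r)] @ [(D, z)]" using TB an by auto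
        then show ?thesis using va' vb' TB an unfolding EE_def lv_def by auto
      qed
    qed
  qed
qed

definition iso :: "(nat \<Rightarrow> nat set set) \<Rightarrow> nat \<Rightarrow> nat \<Rightarrow> nat \<Rightarrow> ((nat \<times> nat) list \<Rightarrow> (nat \<times> nat) list) \<Rightarrow> bool" where
  "iso A c r r' f \<longleftrightarrow> bij_betw f {t. apg_vert A c r t} {t. apg_vert A c r' t} \<and>
     (\<forall>a b D. apg_vert A c r a \<longrightarrow> apg_vert A c r b \<longrightarrow>
        (({a, b}, D) \<in> apg_cat_edges A c r \<longleftrightarrow> ({f a, f b}, D) \<in> apg_cat_edges A c r'))"

lemma psi_iso:
  assumes nl: "\<forall>D\<in>{1..c}. \<forall>z. {z} \<notin> A D"
    and C: "C \<in> {1..c}" and r: "r \<in> \<Union>(A C)" and w: "w \<in> \<Union>(A C)" and rw: "r \<noteq> w"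
  shows "iso A c r w (psi r w C)"
  unfolding iso_def
proof (intro conjI allI impI)
  show "bij_betw (psi r w C) {t. apg_vert A c r t} {t. apg_vert A c w t}"
    by (rule bij_betw_byWitness[where f' = "psi w r C"])
       (auto intro: psi_valid[of C c r A w, OF C r w rw] psi_valid[of C c w A r, OF C w r rw[symmetric]] psi_inv)
next
  fix a b D assume va: "apg_vert A c r a" and vb: "apg_vert A c r b"
  show "({a, b}, D) \<in> apg_cat_edges A c r \<longleftrightarrow> ({psi r w C a, psi r w C b}, D) \<in> apg_cat_edges A c w"
  proof
    assume "({a, b}, D) \<in> apg_cat_edges A c r"
    then show "({psi r w C a, psi r w C b}, D) \<in> apg_cat_edges A c w"
      using psi_EE[OF nl C r w rw] unfolding cat_iff by blast
  next
    assume "({psi r w C a, psi r w C b}, D) \<in> apg_cat_edges A c w"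
    then have "({psi w r C (psi r w C a), psi w r C (psi r w C b)}, D) \<in> apg_cat_edges A c r"
      using psi_EE[OF nl C w r rw[symmetric]] unfolding cat_iff by blast
    then show "({a, b}, D) \<in> apg_cat_edges A c r" using psi_inv va vb by simp
  qed
qed


lemma iso_id: "iso A c r r id"
  unfolding iso_def by simp

lemma iso_comp: "iso A c r1 r2 f \<Longrightarrow> iso A c r2 r3 g \<Longrightarrow> iso A c r1 r3 (g \<circ> f)"
  unfolding iso_def
  apply (intro conjI)
   apply (blast intro: bij_betw_trans)
  apply (simp add: bij_betw_def)
  apply blast
  done

lemma iso_inv:
  assumes "iso A c r r' f"
  shows "iso A c r' r (inv_into {t. apg_vert A c r t} f)"
proof -
  let ?V = "{t. apg_vert A c r t}" and ?V' = "{t. apg_vert A c r' t}"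
  have bij: "bij_betw f ?V ?V'" using assms iso_def by blast
  have bi: "bij_betw (inv_into ?V f) ?V' ?V" by (rule bij_betw_inv_into[OF bij])
  show ?thesis unfolding iso_def
  proof (intro conjI allI impI)
    show "bij_betw (inv_into ?V f) ?V' ?V" by fact
  next
    fix a b D assume a: "apg_vert A c r' a" and b: "apg_vert A c r' b"
    have ia: "apg_vert A c r (inv_into ?V f a)" and ib: "apg_vert A c r (inv_into ?V f b)"
      using bi a b bij_betw_apply by fastforce+
    have fa: "f (inv_into ?V f a) = a" and fb: "f (inv_into ?V f b) = b"
      using bij a b bij_betw_inv_into_right by fastforce+
    show "({a, b}, D) \<in> apg_cat_edges A c r' \<longleftrightarrow> ({inv_into ?V f a, inv_into ?V f b}, D) \<in> apg_cat_edges A c r"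
      using assms ia ib fa fb unfolding iso_def by metis
  qed
qed

lemma Phi:
  assumes nl: "\<forall>D\<in>{1..c}. \<forall>z. {z} \<notin> A D"
  shows "apg_vert A c r P \<Longrightarrow> \<exists>f. iso A c r (lv r P) f \<and> (\<forall>t. apg_vert A c r (P @ t) \<longrightarrow> f (P @ t) = t)"
proof (induction P rule: rev_induct)
  case Nil
  show ?case using iso_id[of A c r] by (intro exI[of _ id]) (simp add: lv_def id_def)
next
  case (snoc p Q)
  obtain D w where p: "p = (D, w)" by (cases p)
  have h: "D \<in> {1..c} \<and> lv r Q \<in> \<Union>(A D) \<and> w \<in> \<Union>(A D) \<and> lv r Q \<noteq> w \<and> apg_vert A c r Q"
    using vert_snoc_D snoc.prems p by blast
  then obtain f where f: "iso A c r (lv r Q) f" and ft: "\<forall>t. apg_vert A c r (Q @ t) \<longrightarrow> f (Q @ t) = t"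
    using snoc.IH by blast
  have i: "iso A c (lv r Q) w (psi (lv r Q) w D)" using psi_iso[OF nl] h by blast
  have "iso A c r w (psi (lv r Q) w D \<circ> f)" using iso_comp[OF f i] .
  moreover have "lv r (Q @ [p]) = w" using p by (simp add: lv_def)
  moreover have "(psi (lv r Q) w D \<circ> f) ((Q @ [p]) @ t) = t" if "apg_vert A c r ((Q @ [p]) @ t)" for t
    using ft that p by simp
  ultimately show ?case by metis
qed

definition h0 :: "nat \<Rightarrow> nat \<Rightarrow> nat \<Rightarrow> (nat \<times> nat) list" where
  "h0 C a z = (if z = a then [] else [(C, z)])"

lemma block:
  assumes nl: "\<forall>D\<in>{1..c}. \<forall>z. {z} \<notin> A D"
    and C: "C \<in> {1..c}" and a: "a \<in> \<Union>(A C)" and b: "b \<in> \<Union>(A C)"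
  shows "\<exists>g. iso A c a b g \<and> (\<forall>z. g (h0 C a z) = h0 C b z)"
proof (cases "a = b")
  case True
  then show ?thesis using iso_id by fastforce
next
  case False
  have "iso A c a b (psi a b C)" using psi_iso[OF nl C a b False] .
  moreover have "psi a b C (h0 C a z) = h0 C b z" for z
    using False by (auto simp: h0_def)
  ultimately show ?thesis by blast
qed


lemma cat_valid: "({a, b}, D) \<in> apg_cat_edges A c r \<Longrightarrow> apg_vert A c r a \<and> apg_vert A c r b"
  unfolding cat_iff EE_def by blast

lemma typed_cat: "(e, C, T) \<in> apg_typed_edges A c r \<Longrightarrow> (e, C) \<in> apg_cat_edges A c r"
  unfolding apg_cat_edges_def by blast

lemma decomp:
  assumes "({x, y}, C, T) \<in> apg_typed_edges A c r"
  shows "\<exists>P a b. T = {a, b} \<and> apg_vert A c r P \<and> lv r P \<in> \<Union>(A C) \<and> C \<in> {1..c} \<and>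
           {x, y} = {P @ h0 C (lv r P) a, P @ h0 C (lv r P) b}"
  using assms unfolding apg_typed_edges_def
proof (elim UnE CollectE exE conjE)
  fix s C0 u0 v0
  assume e: "({x, y}, C, T) = ({s @ [(C0, u0)], s @ [(C0, v0)]}, C0, {u0, v0})"
    and va: "apg_vert A c r (s @ [(C0, u0)])" and vb: "apg_vert A c r (s @ [(C0, v0)])"
  have e1: "{x, y} = {s @ [(C, u0)], s @ [(C, v0)]}" and e2: "C0 = C" and e3: "T = {u0, v0}"
    using e by simp_all
  note A = vert_snoc_D[OF va, unfolded e2] and B = vert_snoc_D[OF vb, unfolded e2]
  have "h0 C (lv r s) u0 = [(C, u0)]" "h0 C (lv r s) v0 = [(C, v0)]"
    using A B unfolding h0_def by simp_all
  then show ?thesis using e1 e3 A by (intro exI[of _ s] exI[of _ u0] exI[of _ v0]) simp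
next
  fix s C0 C' u0 v0
  assume e: "({x, y}, C, T) = ({s @ [(C', u0)], s @ [(C', u0), (C0, v0)]}, C0, {u0, v0})"
    and vb: "apg_vert A c r (s @ [(C', u0), (C0, v0)])"
  have e1: "{x, y} = {(s @ [(C', u0)]) @ [], (s @ [(C', u0)]) @ [(C, v0)]}" and e2: "C0 = C" and e3: "T = {u0, v0}"
    using e by simp_all
  have vb': "apg_vert A c r ((s @ [(C', u0)]) @ [(C, v0)])" using vb e2 by simp
  have lvP: "lv r (s @ [(C', u0)]) = u0" by (simp add: lv_def)
  note B = vert_snoc_D[OF vb', unfolded lvP]
  have "h0 C u0 u0 = []" "h0 C u0 v0 = [(C, v0)]"
    using B unfolding h0_def by simp_all
  then show ?thesis using e1 e3 B lvP
    by (intro exI[of _ "s @ [(C', u0)]"] exI[of _ u0] exI[of _ v0]) simp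
next
  fix C0 v0
  assume e: "({x, y}, C, T) = ({[], [(C0, v0)]}, C0, {r, v0})"
    and vb: "apg_vert A c r [(C0, v0)]"
  have e1: "{x, y} = {[] @ [], [] @ [(C, v0)]}" and e2: "C0 = C" and e3: "T = {r, v0}"
    using e by simp_all
  have vb': "apg_vert A c r ([] @ [(C, v0)])" using vb e2 by simp
  have lvP: "lv r [] = r" by (simp add: lv_def)
  note B = vert_snoc_D[OF vb', unfolded lvP]
  have "h0 C r r = []" "h0 C r v0 = [(C, v0)]"
    using B unfolding h0_def by simp_all
  then show ?thesis using e1 e3 B lvP
    by (intro exI[of _ "[]"] exI[of _ r] exI[of _ v0]) simp
qed

lemma edge_to_root:
  assumes nl: "\<forall>D\<in>{1..c}. \<forall>z. {z} \<notin> A D"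
    and e: "({x, y}, C, {u, v}) \<in> apg_typed_edges A c r" and uv: "{u, v} \<in> A C"
  shows "\<exists>f. iso A c r u f \<and> f ` {x, y} = {[], [(C, v)]}"
proof -
  obtain P a b where ab: "{u, v} = {a, b}" and vP: "apg_vert A c r P" and lP: "lv r P \<in> \<Union>(A C)"
    and C: "C \<in> {1..c}" and xy: "{x, y} = {P @ h0 C (lv r P) a, P @ h0 C (lv r P) b}"
    using decomp[OF e] by blast
  have vxy: "apg_vert A c r x" "apg_vert A c r y" using cat_valid typed_cat[OF e] by blast+
  obtain f0 where f0: "iso A c r (lv r P) f0" and f0t: "\<forall>t. apg_vert A c r (P @ t) \<longrightarrow> f0 (P @ t) = t"
    using Phi[OF nl vP] by blast
  have u: "u \<in> \<Union>(A C)" using uv by blast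
  obtain g where g: "iso A c (lv r P) u g" and gh: "\<forall>z. g (h0 C (lv r P) z) = h0 C u z"
    using block[OF nl C lP u] by blast
  have va: "apg_vert A c r (P @ h0 C (lv r P) a)" and vb: "apg_vert A c r (P @ h0 C (lv r P) b)"
    using vxy xy by (auto simp: doubleton_eq_iff)
  have "(g \<circ> f0) ` {x, y} = {h0 C u a, h0 C u b}"
    unfolding xy using f0t va vb gh by simp
  also have "\<dots> = {h0 C u u, h0 C u v}" using ab by (auto simp: doubleton_eq_iff)
  also have "\<dots> = {[], [(C, v)]}" using nl C uv by (auto simp: h0_def)
  finally show ?thesis using iso_comp[OF f0 g] by blast
qed

lemma adj_valid: "(m, w) \<in> apg_adj A c r \<Longrightarrow> apg_vert A c r m \<and> apg_vert A c r w"
  unfolding apg_adj_def using cat_valid by blast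

lemma iso_relpow:
  assumes f: "iso A c r r' f" and x0: "apg_vert A c r x0"
  shows "(x0, w) \<in> apg_adj A c r ^^ k \<Longrightarrow> apg_vert A c r w \<and> (f x0, f w) \<in> apg_adj A c r' ^^ k"
proof (induction k arbitrary: w)
  case 0
  then show ?case using x0 by simp
next
  case (Suc k)
  then obtain m where m: "(x0, m) \<in> apg_adj A c r ^^ k" and mw: "(m, w) \<in> apg_adj A c r" by auto
  have vm: "apg_vert A c r m" and vw: "apg_vert A c r w" using adj_valid[OF mw] by auto
  have "(f m, f w) \<in> apg_adj A c r'"
    using mw f vm vw unfolding apg_adj_def iso_def by blast
  then show ?case using Suc.IH[OF m] vw by auto
qed

lemma ball_valid: "apg_vert A c r x \<Longrightarrow> apg_vert A c r y \<Longrightarrow> apg_ball A c r p x y \<subseteq> {t. apg_vert A c r t}"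
proof
  fix w assume x: "apg_vert A c r x" and y: "apg_vert A c r y" and w: "w \<in> apg_ball A c r p x y"
  then obtain k where "(x, w) \<in> apg_adj A c r ^^ k \<or> (y, w) \<in> apg_adj A c r ^^ k"
    unfolding apg_ball_def by blast
  then show "w \<in> {t. apg_vert A c r t}"
    using iso_relpow[OF iso_id x, of w k] iso_relpow[OF iso_id y, of w k] by blast
qed

lemma ball_sub:
  assumes f: "iso A c r r' f" and x: "apg_vert A c r x" and y: "apg_vert A c r y"
  shows "f ` apg_ball A c r p x y \<subseteq> apg_ball A c r' p (f x) (f y)"
  unfolding apg_ball_def using iso_relpow[OF f x] iso_relpow[OF f y] by blast

lemma ball_sym: "apg_ball A c r p x y = apg_ball A c r p y x"
  unfolding apg_ball_def by blast

lemma ball_eq: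
  assumes f: "iso A c r r' f" and x: "apg_vert A c r x" and y: "apg_vert A c r y"
  shows "f ` apg_ball A c r p x y = apg_ball A c r' p (f x) (f y)"
proof
  show "f ` apg_ball A c r p x y \<subseteq> apg_ball A c r' p (f x) (f y)" using ball_sub[OF f x y] .
next
  let ?V = "{t. apg_vert A c r t}"
  let ?g = "inv_into ?V f"
  have bij: "bij_betw f ?V {t. apg_vert A c r' t}" using f iso_def by blast
  have g: "iso A c r' r ?g" using iso_inv[OF f] .
  have fx: "apg_vert A c r' (f x)" "apg_vert A c r' (f y)" using bij x y bij_betw_apply by fastforce+
  have gx: "?g (f x) = x" "?g (f y) = y" using bij x y bij_betw_inv_into_left by fastforce+
  have sub: "?g ` apg_ball A c r' p (f x) (f y) \<subseteq> apg_ball A c r p x y"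
    using ball_sub[OF g fx] gx by simp
  have bv: "apg_ball A c r' p (f x) (f y) \<subseteq> {t. apg_vert A c r' t}" using ball_valid fx by blast
  show "apg_ball A c r' p (f x) (f y) \<subseteq> f ` apg_ball A c r p x y"
  proof
    fix w assume w: "w \<in> apg_ball A c r' p (f x) (f y)"
    then have "f (?g w) = w" using bv bij bij_betw_inv_into_right by fastforce
    moreover have "?g w \<in> apg_ball A c r p x y" using sub w by blast
    ultimately show "w \<in> f ` apg_ball A c r p x y" by force
  qed
qed

lemma iso_cat_set:
  assumes f: "iso A c r r' f" and e: "e \<subseteq> {t. apg_vert A c r t}"
  shows "(e, D) \<in> apg_cat_edges A c r \<longleftrightarrow> (f ` e, D) \<in> apg_cat_edges A c r'"
proof -
  have H: "\<forall>a b D. apg_vert A c r a \<longrightarrow> apg_vert A c r b \<longrightarrow>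
        (({a, b}, D) \<in> apg_cat_edges A c r \<longleftrightarrow> ({f a, f b}, D) \<in> apg_cat_edges A c r')"
    using f unfolding iso_def by (rule conjunct2)
  note ed = H[rule_format]
  have inj: "inj_on f e" using f e unfolding iso_def bij_betw_def by (blast intro: inj_on_subset)
  show ?thesis
  proof
    assume h: "(e, D) \<in> apg_cat_edges A c r"
    then obtain a b where ab: "e = {a, b}" using cat_form by blast
    have "apg_vert A c r a" "apg_vert A c r b" using e ab by auto
    then show "(f ` e, D) \<in> apg_cat_edges A c r'" using ed h ab by simp
  next
    assume h: "(f ` e, D) \<in> apg_cat_edges A c r'"
    obtain a' b' where ab: "f ` e = {a', b'}" using cat_form[OF h] by iprover
    have "a' \<in> f ` e" "b' \<in> f ` e" unfolding ab by simp_all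
    then obtain a b where a: "a \<in> e" "a' = f a" and b: "b \<in> e" "b' = f b" by (meson imageE)
    have eab: "e = {a, b}"
    proof
      show "e \<subseteq> {a, b}"
      proof
        fix z assume z: "z \<in> e"
        then have "f z \<in> {f a, f b}" using ab a b by (metis imageI)
        then have "f z = f a \<or> f z = f b" by blast
        then show "z \<in> {a, b}" using inj_onD[OF inj _ z a(1)] inj_onD[OF inj _ z b(1)] by auto
      qed
    qed (use a b in blast)
    have va: "apg_vert A c r a" "apg_vert A c r b" using e a b by auto
    have "({f a, f b}, D) \<in> apg_cat_edges A c r'" using h ab a b by simp
    then show "(e, D) \<in> apg_cat_edges A c r" using ed[OF va] eab by simp
  qed
qed


lemma zz_sym: "zz_exp W Ed p g b x y = zz_exp W Ed p g b y x"
  unfolding zz_exp_def by (simp add: ac_simps)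

theorem mainTheorem1:
  fixes n c r p C u v :: nat and A :: "nat \<Rightarrow> nat set set"
    and \<gamma> :: "nat \<Rightarrow> nat \<Rightarrow> real" and \<beta> :: "nat \<Rightarrow> real"
    and x y x' y' :: "(nat \<times> nat) list"
  assumes "atoms_ok n c A" and "r \<in> {1..n}" and "p \<ge> 1"
    and "\<forall>j\<in>{1..p}. \<forall>D\<in>{1..c}. 0 \<le> \<gamma> j D \<and> \<gamma> j D \<le> 2 * pi"
    and "\<forall>j\<in>{1..p}. 0 \<le> \<beta> j \<and> \<beta> j \<le> 2 * pi"
    and "C \<in> {1..c}" and "{u, v} \<in> A C"
    and "({x, y}, C, {u, v}) \<in> apg_typed_edges A c r"
    and "({x', y'}, C, {u, v}) \<in> apg_typed_edges A c r"
  shows "apg_zz A c r p \<gamma> \<beta> x y = apg_zz A c r p \<gamma> \<beta> x' y'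
    \<and> (\<exists>f. bij_betw f (apg_ball A c r p x y) (apg_ball A c r p x' y')
           \<and> f ` {x, y} = {x', y'}
           \<and> (\<forall>e C'. e \<subseteq> apg_ball A c r p x y \<longrightarrow>
                 ((e, C') \<in> apg_induced A c r (apg_ball A c r p x y)
                  \<longleftrightarrow> (f ` e, C') \<in> apg_induced A c r (apg_ball A c r p x' y'))))"
proof -
  have nl: "\<forall>D\<in>{1..c}. \<forall>z. {z} \<notin> A D"
  proof (intro ballI allI notI)
    fix D z assume D: "D \<in> {1..c}" and h: "{z} \<in> A D"
    have "A D \<subseteq> {e. \<exists>a b. e = {a, b} \<and> a \<noteq> b \<and> a \<in> {1..n} \<and> b \<in> {1..n}}"
      using assms(1) D unfolding atoms_ok_def by blast
    then have "\<exists>a b. {z} = {a, b} \<and> a \<noteq> b" using h by blast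
    then show False by (auto simp: doubleton_eq_iff)
  qed
  let ?V = "{t. apg_vert A c r t}"
  obtain f1 where f1: "iso A c r u f1" and f1e: "f1 ` {x, y} = {[], [(C, v)]}"
    using edge_to_root[OF nl assms(8) assms(7)] by blast
  obtain f2 where f2: "iso A c r u f2" and f2e: "f2 ` {x', y'} = {[], [(C, v)]}"
    using edge_to_root[OF nl assms(9) assms(7)] by blast
  define F where "F = inv_into ?V f2 \<circ> f1"
  have F: "iso A c r r F" unfolding F_def using iso_comp[OF f1 iso_inv[OF f2]] .
  have vxy: "apg_vert A c r x" "apg_vert A c r y" using cat_valid typed_cat[OF assms(8)] by blast+
  have vxy': "apg_vert A c r x'" "apg_vert A c r y'" using cat_valid typed_cat[OF assms(9)] by blast+
  have inj2: "inj_on f2 ?V" using f2 unfolding iso_def bij_betw_def by blast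
  have Fe: "F ` {x, y} = {x', y'}"
  proof -
    have "F ` {x, y} = inv_into ?V f2 ` (f1 ` {x, y})" unfolding F_def by (simp add: image_comp)
    also have "\<dots> = inv_into ?V f2 ` (f2 ` {x', y'})" using f1e f2e by simp
    also have "\<dots> = {x', y'}" by (rule inv_into_image_cancel[OF inj2]) (use vxy' in simp)
    finally show ?thesis .
  qed
  then have Fxy: "(F x = x' \<and> F y = y') \<or> (F x = y' \<and> F y = x')" by (simp add: doubleton_eq_iff)
  let ?W = "apg_ball A c r p x y" and ?W' = "apg_ball A c r p x' y'"
  have ballF: "apg_ball A c r p (F x) (F y) = ?W'"
    using Fxy ball_sym[of A c r p x' y'] by auto
  have WF: "F ` ?W = ?W'" using ball_eq[OF F vxy] ballF by simp
  have WV: "?W \<subseteq> ?V" using ball_valid[OF vxy] .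
  have injF: "inj_on F ?V" using F unfolding iso_def bij_betw_def by blast
  have bijF: "bij_betw F ?W ?W'"
    by (rule bij_betw_imageI[OF inj_on_subset[OF injF WV] WF])
  have ind: "(e, C') \<in> apg_induced A c r ?W \<longleftrightarrow> (F ` e, C') \<in> apg_induced A c r ?W'"
    if e: "e \<subseteq> ?W" for e C'
  proof -
    have "(e, C') \<in> apg_cat_edges A c r \<longleftrightarrow> (F ` e, C') \<in> apg_cat_edges A c r"
      using iso_cat_set[OF F] e WV by blast
    moreover have "F ` e \<subseteq> ?W'" using e WF by blast
    ultimately show ?thesis using e unfolding apg_induced_def by simp
  qed
  have EdW: "\<forall>(e, D)\<in>apg_induced A c r ?W. e \<subseteq> ?W" unfolding apg_induced_def by blast
  have Ed': "apg_induced A c r ?W' = (\<lambda>(e, D). (F ` e, D)) ` apg_induced A c r ?W"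
  proof
    show "apg_induced A c r ?W' \<subseteq> (\<lambda>(e, D). (F ` e, D)) ` apg_induced A c r ?W"
    proof
      fix z assume z: "z \<in> apg_induced A c r ?W'"
      obtain e' D where z': "z = (e', D)" by (cases z)
      have "e' \<subseteq> F ` ?W" using z z' WF unfolding apg_induced_def by blast
      then obtain e where e: "e \<subseteq> ?W" and ee: "e' = F ` e" by (auto simp: subset_image_iff)
      have "(e, D) \<in> apg_induced A c r ?W" using ind[OF e, of D] z z' ee by simp
      then show "z \<in> (\<lambda>(e, D). (F ` e, D)) ` apg_induced A c r ?W" using z' ee by force
    qed
  next
    show "(\<lambda>(e, D). (F ` e, D)) ` apg_induced A c r ?W \<subseteq> apg_induced A c r ?W'"
    proof
      fix z assume "z \<in> (\<lambda>(e, D). (F ` e, D)) ` apg_induced A c r ?W"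
      then obtain e D where z: "z = (F ` e, D)" and eD: "(e, D) \<in> apg_induced A c r ?W" by auto
      have "e \<subseteq> ?W" using eD unfolding apg_induced_def by blast
      then show "z \<in> apg_induced A c r ?W'" using ind eD z by blast
    qed
  qed
  have r0: "(x, x) \<in> apg_adj A c r ^^ 0" "(y, y) \<in> apg_adj A c r ^^ 0" by simp_all
  have xW: "x \<in> ?W" and yW: "y \<in> ?W" unfolding apg_ball_def using r0 by blast+
  have zz: "zz_exp ?W' (apg_induced A c r ?W') p \<gamma> \<beta> (F x) (F y) = zz_exp ?W (apg_induced A c r ?W) p \<gamma> \<beta> x y"
    using zz_iso[OF bijF EdW Ed' xW yW] .
  have "apg_zz A c r p \<gamma> \<beta> x' y' = zz_exp ?W' (apg_induced A c r ?W') p \<gamma> \<beta> x' y'"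
    unfolding apg_zz_def Let_def ..
  also have "\<dots> = zz_exp ?W' (apg_induced A c r ?W') p \<gamma> \<beta> (F x) (F y)"
    using Fxy zz_sym[of ?W' _ p \<gamma> \<beta> x' y'] by auto
  also have "\<dots> = apg_zz A c r p \<gamma> \<beta> x y" unfolding zz apg_zz_def Let_def ..
  finally have z1: "apg_zz A c r p \<gamma> \<beta> x y = apg_zz A c r p \<gamma> \<beta> x' y'" ..
  have ind': "\<forall>e C'. e \<subseteq> ?W \<longrightarrow> ((e, C') \<in> apg_induced A c r ?W \<longleftrightarrow> (F ` e, C') \<in> apg_induced A c r ?W')"
    using ind by blast
  show ?thesis
    apply (rule conjI[OF z1])
    apply (rule exI[of _ F])
    using bijF Fe ind' by (intro conjI)
qed

end
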